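(* The assignment $c\mapsto[\![c]\!]_{op}$ is a morphism of props $\mathsf{ACirc}\to\mathsf{Traj}$; that is, for all circuits $c,d$: $[\![c;d]\!]_{op}=[\![c]\!]_{op};[\![d]\!]_{op}$ whenever $c;d$ is defined, $[\![c\oplus d]\!]_{op}=[\![c]\!]_{op}\oplus[\![d]\!]_{op}$, and identities and symmetries are sent to the identities and symmetries of $\mathsf{Traj}$.
   Context: Fix a field $k$. Circuits are terms built from generators, each with a sort $(n,m)$: copier $\Delta:(1,2)$, discard $!:(1,0)$, amplifier $\mathsf{s}_r:(1,1)$ ($r\in k$), register $\mathsf{x}:(1,1)$, adder $+:(2,1)$, zero $0:(0,1)$, one $\mathbf{1}:(0,1)$; mirror images $\Delta^{op}:(2,1)$, $!^{op}:(0,1)$, $\mathsf{s}_r^{op}:(1,1)$, $\mathsf{x}^{op}:(1,1)$, $+^{op}:(1,2)$, $0^{op}:(1,0)$, $\mathbf{1}^{op}:(1,0)$; $\mathrm{id}_0:(0,0)$, $\mathrm{id}_1:(1,1)$, $\mathrm{sw}:(2,2)$; closed under sequential composition $c;d$ (matching middle sort) and parallel composition $c\oplus d$ (sorts add). Modulo symmetric monoidal category laws they form the prop $\mathsf{ACirc}$. Operational semantics: a state is a circuit with a value of $k$ in each register ($\mathsf x$, $\mathsf x^{op}$); the initial state $c_0$ stores $0$ everywhere. Transitions $t\vdash c\xrightarrow[w]{v}c'$ (time $t\in\mathbb Z$, left label $v\in k^n$, right label $w\in k^m$) are generated by, for all $t$ and $a,b\in k$: $\Delta$: left $a$, right $(a,a)$;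 $!$: left $a$, right $\bullet$; $+$: left $(a,b)$, right $a+b$; $0$: left $\bullet$, right $0$; $\mathsf s_r$: left $a$, right $ra$; $\mathsf x$ storing $b$: left $a$, right $b$, then stores $a$; $\mathbf 1$: left $\bullet$, right $1$ if $t=0$, $0$ if $t\neq0$; mirrored generators: same rules with left/right labels exchanged; $\mathrm{id}_1$: $a/a$; $\mathrm{sw}$: $(a,b)/(b,a)$; $\mathrm{id}_0$: $\bullet/\bullet$; for $;$ the components synchronise at the same time on the shared middle label, for $\oplus$ they move at the same time with labels concatenated. A computation starting at time $t\le0$ is a sequence of transitions $t\vdash c_0\xrightarrow[v_t]{u_t}c_1$, $t+1\vdash c_1\xrightarrow[v_{t+1}]{u_{t+1}}c_2,\dots$ from the initial state. An $(n,m)$-trajectory is a map $\sigma:\mathbb Z\to k^n\times k^m$ with some $j$ such that $\sigma(i)=(0,0)$ for all $i\le j$; write $\sigma=\langle\sigma_l,\sigma_r\rangle$. For sets $S$ of $(k',m)$-trajectories and $T$ of $(m,n)$-trajectories, $S;T=\{\langle\sigma_l,\tau_r\rangle:\sigma\in S,\tau\in T,\sigma_r=\tau_l\}$; $S_1\oplus S_2=\{\sigma_1\oplus\sigma_2\}$ with $(\sigma_1\oplus\sigma_2)(i)$ the componentwise stacking of $\sigma_1(i)$ and $\sigma_2(i)$. These form a prop $\mathsf{Traj}$ whose arrows $n\to m$ are sets of $(n,m)$-trajectories. $[\![c]\!]_{op}$ is the set of trajectories $\sigma$ associated to infinite computations of $c$: $\sigma(i)=(u_i,v_i)$ for $i\ge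 t$ and $(0,0)$ for $i<t$, where $t$ is the starting time. *)

theory Defs
  imports Main
begin

text \<open>Terms over generators. The parameter 'r is the content of register nodes:
  for circuits it is unit, for states it is the stored field value.\<close>
datatype ('k, 'r) cterm =
    Copy | Disc | Amp 'k | Reg 'r | Add | Zero | One
  | CopyOp | DiscOp | AmpOp 'k | RegOp 'r | AddOp | ZeroOp | OneOp
  | Id0 | Id1 | Sw
  | Seq "('k, 'r) cterm" "('k, 'r) cterm"
  | Par "('k, 'r) cterm" "('k, 'r) cterm"

type_synonym 'k circ = "('k, unit) cterm"
type_synonym 'k state = "('k, 'k) cterm"

fun cdom :: "('k, 'r) cterm \<Rightarrow> nat" and ccod :: "('k, 'r) cterm \<Rightarrow> nat" where
  "cdom Copy = 1" | "ccod Copy = 2"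
| "cdom Disc = 1" | "ccod Disc = 0"
| "cdom (Amp r) = 1" | "ccod (Amp r) = 1"
| "cdom (Reg x) = 1" | "ccod (Reg x) = 1"
| "cdom Add = 2" | "ccod Add = 1"
| "cdom Zero = 0" | "ccod Zero = 1"
| "cdom One = 0" | "ccod One = 1"
| "cdom CopyOp = 2" | "ccod CopyOp = 1"
| "cdom DiscOp = 0" | "ccod DiscOp = 1"
| "cdom (AmpOp r) = 1" | "ccod (AmpOp r) = 1"
| "cdom (RegOp x) = 1" | "ccod (RegOp x) = 1"
| "cdom AddOp = 1" | "ccod AddOp = 2"
| "cdom ZeroOp = 1" | "ccod ZeroOp = 0"
| "cdom OneOp = 1" | "ccod OneOp = 0"
| "cdom Id0 = 0" | "ccod Id0 = 0"
| "cdom Id1 = 1" | "ccod Id1 = 1"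
| "cdom Sw = 2" | "ccod Sw = 2"
| "cdom (Seq c d) = cdom c" | "ccod (Seq c d) = ccod d"
| "cdom (Par c d) = cdom c + cdom d" | "ccod (Par c d) = ccod c + ccod d"

fun wf :: "('k, 'r) cterm \<Rightarrow> bool" where
  "wf (Seq c d) = (wf c \<and> wf d \<and> ccod c = cdom d)"
| "wf (Par c d) = (wf c \<and> wf d)"
| "wf _ = True"

fun idc :: "nat \<Rightarrow> 'k circ" where
  "idc 0 = Id0"
| "idc (Suc n) = Par Id1 (idc n)"

fun sw1 :: "nat \<Rightarrow> 'k circ" where
  "sw1 0 = Id1"
| "sw1 (Suc m) = Seq (Par Sw (idc m)) (Par Id1 (sw1 m))"

fun symc :: "nat \<Rightarrow> nat \<Rightarrow> 'k circ" where
  "symc 0 m = idc m"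
| "symc (Suc n) m = Seq (Par Id1 (symc n m)) (Par (sw1 m) (idc n))"

definition init :: "'k::zero circ \<Rightarrow> 'k state" where
  "init c = map_cterm id (\<lambda>_. 0) c"

inductive step :: "int \<Rightarrow> 'k::field state \<Rightarrow> 'k list \<Rightarrow> 'k list \<Rightarrow> 'k state \<Rightarrow> bool" where
  "step t Copy [a] [a, a] Copy"
| "step t Disc [a] [] Disc"
| "step t Add [a, b] [a + b] Add"
| "step t Zero [] [0] Zero"
| "step t (Amp r) [a] [r * a] (Amp r)"
| "step t (Reg b) [a] [b] (Reg a)"
| "step t One [] [if t = 0 then 1 else 0] One"
| "step t CopyOp [a, a] [a] CopyOp"
| "step t DiscOp [] [a] DiscOp"
| "step t AddOp [a + b] [a, b] AddOp"
| "step t ZeroOp [0] [] ZeroOp"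
| "step t (AmpOp r) [r * a] [a] (AmpOp r)"
| "step t (RegOp b) [b] [a] (RegOp a)"
| "step t OneOp [if t = 0 then 1 else 0] [] OneOp"
| "step t Id1 [a] [a] Id1"
| "step t Sw [a, b] [b, a] Sw"
| "step t Id0 [] [] Id0"
| "step t c v w c' \<Longrightarrow> step t d w u d' \<Longrightarrow> step t (Seq c d) v u (Seq c' d')"
| "step t c v1 w1 c' \<Longrightarrow> step t d v2 w2 d' \<Longrightarrow>
     step t (Par c d) (v1 @ v2) (w1 @ w2) (Par c' d')"

definition computation ::
  "'k::field circ \<Rightarrow> int \<Rightarrow> (nat \<Rightarrow> 'k state) \<Rightarrow> (nat \<Rightarrow> 'k list) \<Rightarrow> (nat \<Rightarrow> 'k list) \<Rightarrow> bool" where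
  "computation c t s u v \<longleftrightarrow> t \<le> 0 \<and> s 0 = init c \<and>
     (\<forall>i. step (t + int i) (s i) (u i) (v i) (s (Suc i)))"

type_synonym 'k traj = "int \<Rightarrow> 'k list \<times> 'k list"

definition is_traj :: "nat \<Rightarrow> nat \<Rightarrow> 'k::zero traj \<Rightarrow> bool" where
  "is_traj n m \<sigma> \<longleftrightarrow> (\<forall>i. length (fst (\<sigma> i)) = n \<and> length (snd (\<sigma> i)) = m) \<and>
     (\<exists>j. \<forall>i\<le>j. \<sigma> i = (replicate n 0, replicate m 0))"

definition opsem :: "'k::field circ \<Rightarrow> 'k traj set" where
  "opsem c = {\<sigma>. \<exists>t s u v. computation c t s u v \<and>
      \<sigma> = (\<lambda>i. if i < t then (replicate (cdom c) 0, replicate (ccod c) 0)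
                else (u (nat (i - t)), v (nat (i - t))))}"

definition compT :: "'k traj set \<Rightarrow> 'k traj set \<Rightarrow> 'k traj set" where
  "compT S T = {(\<lambda>i. (fst (\<sigma> i), snd (\<tau> i))) | \<sigma> \<tau>.
      \<sigma> \<in> S \<and> \<tau> \<in> T \<and> (\<forall>i. snd (\<sigma> i) = fst (\<tau> i))}"

definition parT :: "'k traj set \<Rightarrow> 'k traj set \<Rightarrow> 'k traj set" where
  "parT S T = {(\<lambda>i. (fst (\<sigma> i) @ fst (\<tau> i), snd (\<sigma> i) @ snd (\<tau> i))) | \<sigma> \<tau>.
      \<sigma> \<in> S \<and> \<tau> \<in> T}"

definition idT :: "nat \<Rightarrow> 'k::zero traj set" where
  "idT n = {\<sigma>. is_traj n n \<sigma> \<and> (\<forall>i. fst (\<sigma> i) = snd (\<sigma> i))}"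

definition symT :: "nat \<Rightarrow> nat \<Rightarrow> 'k::zero traj set" where
  "symT n m = {\<sigma>. is_traj (n + m) (m + n) \<sigma> \<and>
      (\<forall>i. snd (\<sigma> i) = drop n (fst (\<sigma> i)) @ take n (fst (\<sigma> i)))}"

end

theory Submission imports Defs begin
lemma step_len: "step t x v w x' \<Longrightarrow> length v = cdom x \<and> length w = ccod x"
  by (induction rule: step.induct) auto

lemma init_simps[simp]:
  "init (Seq c d) = Seq (init c) (init d)" "init (Par c d) = Par (init c) (init d)"
  "init (Copy::'k::zero circ) = Copy" "init (Disc::'k::zero circ) = Disc"
  "init (Amp r) = Amp r" "init (Reg x) = Reg 0" "init (Add::'k::zero circ) = Add"
  "init (Zero::'k::zero circ) = Zero" "init (One::'k::zero circ) = One"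
  "init (CopyOp::'k::zero circ) = CopyOp" "init (DiscOp::'k::zero circ) = DiscOp"
  "init (AmpOp r) = AmpOp r" "init (RegOp x) = RegOp 0" "init (AddOp::'k::zero circ) = AddOp"
  "init (ZeroOp::'k::zero circ) = ZeroOp" "init (OneOp::'k::zero circ) = OneOp"
  "init (Id0::'k::zero circ) = Id0" "init (Id1::'k::zero circ) = Id1" "init (Sw::'k::zero circ) = Sw"
  by (simp_all add: init_def)

lemma init_dom[simp]: "cdom (init c) = cdom c" "ccod (init c) = ccod c"
  by (induction c) auto

lemma idle: "wf c \<Longrightarrow> t \<noteq> 0 \<Longrightarrow>
  step t (init c) (replicate (cdom c) (0::'k::field)) (replicate (ccod c) 0) (init c)"
proof (induction c)
  case (Seq c d)
  then show ?case by (auto intro: step.intros)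
next
  case (Par c d)
  then show ?case by (auto simp: replicate_add intro: step.intros)
next
  case AddOp
  show ?case using step.intros(10)[of t "0::'k" 0] by (simp add: numeral_2_eq_2)
next
  case (AmpOp r)
  show ?case using step.intros(12)[of t r "0::'k"] by simp
next
  case OneOp
  show ?case using step.intros(14)[of t] OneOp by simp
next
  case One
  show ?case using step.intros(7)[of t] One by simp
next
  case (Amp r)
  show ?case using step.intros(5)[of t r "0::'k"] by simp
next
  case Add
  show ?case using step.intros(3)[of t "0::'k" 0] by (simp add: numeral_2_eq_2)
next
  case (Reg x)
  show ?case using step.intros(6)[of t "0::'k" 0] by simp
next
  case (RegOp x)
  show ?case using step.intros(13)[of t "0::'k" 0] by simp
qed (auto simp: numeral_2_eq_2 intro: step.intros)

inductive_cases seqE: "step t (Seq a b) v u x'"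
inductive_cases parE: "step t (Par a b) v u x'"

lemma step_Seq: "step t (Seq a b) v u x' \<longleftrightarrow> (\<exists>w a' b'. x' = Seq a' b' \<and> step t a v w a' \<and> step t b w u b')"
  by (auto elim!: seqE intro: step.intros)

lemma step_Par: "step t (Par a b) v u x' \<longleftrightarrow> (\<exists>v1 v2 u1 u2 a' b'. x' = Par a' b' \<and> v = v1 @ v2 \<and> u = u1 @ u2 \<and> step t a v1 u1 a' \<and> step t b v2 u2 b')"
  by (auto elim!: parE intro: step.intros) blast

fun simple :: "('k, 'r) cterm \<Rightarrow> bool" where
  "simple Id0 = True" | "simple Id1 = True" | "simple Sw = True"
| "simple (Seq c d) = (simple c \<and> simple d \<and> ccod c = cdom d)"
| "simple (Par c d) = (simple c \<and> simple d)"
| "simple _ = False"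

fun app :: "('k, 'r) cterm \<Rightarrow> 'k list \<Rightarrow> 'k list" where
  "app Sw v = drop 1 v @ take 1 v"
| "app (Seq c d) v = app d (app c v)"
| "app (Par c d) v = app c (take (cdom c) v) @ app d (drop (cdom c) v)"
| "app _ v = v"

lemma init_simple[simp]: "simple (init c) = simple c"
  by (induction c) auto

lemma init_app[simp]: "app (init c) v = app c v"
  by (induction c arbitrary: v) auto

lemma app_len: "simple x \<Longrightarrow> length v = cdom x \<Longrightarrow> length (app x v) = ccod x"
  by (induction x arbitrary: v) auto

lemma app_zero: "simple x \<Longrightarrow> app x (replicate (cdom x) 0) = replicate (ccod x) 0"
  by (induction x) (auto simp: replicate_add numeral_2_eq_2)

lemma step_simple: "simple x \<Longrightarrow> step t x v w x' \<longleftrightarrow> (x' = x \<and> length v = cdom x \<and> w = app x v)"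
proof (induction x arbitrary: v w x')
  case Id0
  then show ?case by (auto elim: step.cases intro: step.intros)
next
  case Id1
  show ?case
  proof
    assume "step t Id1 v w x'" then show "x' = Id1 \<and> length v = cdom Id1 \<and> w = app Id1 v"
      by (cases rule: step.cases) auto
  next
    assume "x' = Id1 \<and> length v = cdom Id1 \<and> w = app Id1 v"
    then show "step t Id1 v w x'" by (auto simp: length_Suc_conv intro: step.intros)
  qed
next
  case Sw
  show ?case
  proof
    assume "step t Sw v w x'" then show "x' = Sw \<and> length v = cdom Sw \<and> w = app Sw v"
      by (cases rule: step.cases) auto
  next
    assume "x' = Sw \<and> length v = cdom Sw \<and> w = app Sw v"
    then show "step t Sw v w x'" by (auto simp: length_Suc_conv numeral_2_eq_2 intro: step.intros)
  qed
next
  case (Seq c d)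
  then show ?case using app_len[of c] by (auto simp: step_Seq)
next
  case (Par c d)
  show ?case
  proof
    assume "step t (Par c d) v w x'"
    then show "x' = Par c d \<and> length v = cdom (Par c d) \<and> w = app (Par c d) v"
      using Par by (auto simp: step_Par)
  next
    assume a: "x' = Par c d \<and> length v = cdom (Par c d) \<and> w = app (Par c d) v"
    have "step t (Par c d) (take (cdom c) v @ drop (cdom c) v)
       (app c (take (cdom c) v) @ app d (drop (cdom c) v)) (Par c d)"
      using Par a by (intro step.intros) auto
    then show "step t (Par c d) v w x'" using a by simp
  qed
qed auto

definition trj :: "nat \<Rightarrow> nat \<Rightarrow> int \<Rightarrow> (nat \<Rightarrow> 'k::zero list) \<Rightarrow> (nat \<Rightarrow> 'k list) \<Rightarrow> 'k traj" where
  "trj n m t u v = (\<lambda>i. if i < t then (replicate n 0, replicate m 0) else (u (nat (i - t)), v (nat (i - t))))"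

lemma opsem_iff: "\<sigma> \<in> opsem c \<longleftrightarrow> (\<exists>t s u v. computation c t s u v \<and> \<sigma> = trj (cdom c) (ccod c) t u v)"
  unfolding opsem_def trj_def by simp

lemma opsem_simple:
  fixes c :: "'k::field circ"
  assumes sc: "simple c"
  shows "opsem c = {\<sigma>. is_traj (cdom c) (ccod c) \<sigma> \<and> (\<forall>i. snd (\<sigma> i) = app c (fst (\<sigma> i)))}"
proof (intro set_eqI iffI)
  fix \<sigma> assume "\<sigma> \<in> opsem c"
  then obtain t s u v where comp: "computation c t s u v" and sig: "\<sigma> = trj (cdom c) (ccod c) t u v"
    by (auto simp: opsem_iff)
  have st: "\<forall>i. step (t + int i) (s i) (u i) (v i) (s (Suc i))" and s0: "s 0 = init c" and t0: "t \<le> 0"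
    using comp by (auto simp: computation_def)
  have si: "s i = init c" for i
  proof (induction i)
    case 0 then show ?case using s0 .
  next
    case (Suc i) then show ?case using st[rule_format, of i] step_simple[of "init c"] sc by auto
  qed
  have uv: "length (u i) = cdom c \<and> v i = app c (u i)" for i
    using st[rule_format, of i] step_simple[of "init c"] sc si by auto
  have "is_traj (cdom c) (ccod c) \<sigma>"
    unfolding is_traj_def sig trj_def using uv app_len[OF sc] by (auto intro!: exI[of _ "t - 1"])
  moreover have "\<forall>i. snd (\<sigma> i) = app c (fst (\<sigma> i))"
    unfolding sig trj_def using uv app_zero[OF sc] by auto
  ultimately show "\<sigma> \<in> {\<sigma>. is_traj (cdom c) (ccod c) \<sigma> \<and> (\<forall>i. snd (\<sigma> i) = app c (fst (\<sigma> i)))}" by simp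
next
  fix \<sigma> assume "\<sigma> \<in> {\<sigma>. is_traj (cdom c) (ccod c) \<sigma> \<and> (\<forall>i. snd (\<sigma> i) = app c (fst (\<sigma> i)))}"
  then have tr: "is_traj (cdom c) (ccod c) \<sigma>" and ap: "\<forall>i. snd (\<sigma> i) = app c (fst (\<sigma> i))" by auto
  from tr obtain j where j: "\<forall>i\<le>j. \<sigma> i = (replicate (cdom c) 0, replicate (ccod c) 0)"
    and len: "\<forall>i. length (fst (\<sigma> i)) = cdom c" by (auto simp: is_traj_def)
  define t where "t = min j 0"
  define u where "u = (\<lambda>k::nat. fst (\<sigma> (t + int k)))"
  define v where "v = (\<lambda>k::nat. snd (\<sigma> (t + int k)))"
  have "computation c t (\<lambda>_. init c) u v"
    unfolding computation_def using sc len ap by (auto simp: t_def u_def v_def step_simple)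
  moreover have "\<sigma> = trj (cdom c) (ccod c) t u v"
  proof
    fix i
    show "\<sigma> i = trj (cdom c) (ccod c) t u v i"
    proof (cases "i < t")
      case True then show ?thesis using j by (auto simp: trj_def t_def)
    next
      case False then show ?thesis by (auto simp: trj_def u_def v_def)
    qed
  qed
  ultimately show "\<sigma> \<in> opsem c" by (auto simp: opsem_iff)
qed

lemma idc_props[simp]: "simple (idc n)" "cdom (idc n) = n" "ccod (idc n) = n"
  by (induction n) auto

lemma app_idc: "length v = n \<Longrightarrow> app (idc n) v = v"
  by (induction n arbitrary: v) auto

lemma sw1_dc[simp]: "cdom (sw1 m) = Suc m \<and> ccod (sw1 m) = Suc m"
  by (induction m) auto

lemma sw1_props[simp]: "simple (sw1 m)" "cdom (sw1 m) = Suc m" "ccod (sw1 m) = Suc m"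
  by (induction m) (simp_all add: sw1_dc[of m])

lemma app_sw1: "length v = Suc m \<Longrightarrow> app (sw1 m) v = drop 1 v @ take 1 v"
proof (induction m arbitrary: v)
  case 0 then show ?case by (auto simp: length_Suc_conv)
next
  case (Suc m)
  then obtain a b r where v: "v = a # b # r" and r: "length r = m" by (auto simp: length_Suc_conv)
  then show ?case using Suc.IH[of "a # r"] by (simp add: app_idc numeral_2_eq_2)
qed

lemma symc_dc[simp]: "cdom (symc n m) = n + m \<and> ccod (symc n m) = m + n"
  by (induction n) auto

lemma symc_props[simp]: "simple (symc n m)" "cdom (symc n m) = n + m" "ccod (symc n m) = m + n"
  by (induction n) (simp_all add: symc_dc[of _ m])

lemma app_symc: "length v = n + m \<Longrightarrow> app (symc n m) v = drop n v @ take n v"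
proof (induction n arbitrary: v)
  case 0 then show ?case by (simp add: app_idc)
next
  case (Suc n)
  then obtain a r where v: "v = a # r" and r: "length r = n + m" by (auto simp: length_Suc_conv)
  then show ?case using Suc.IH[of r] app_sw1[of "a # drop n r" m] by (simp add: app_idc)
qed

lemma opsem_idc: "opsem (idc n :: 'k::field circ) = idT n"
  unfolding opsem_simple[OF idc_props(1)] idT_def is_traj_def
  by (auto simp: app_idc)

lemma opsem_symc: "opsem (symc n m :: 'k::field circ) = symT n m"
  unfolding opsem_simple[OF symc_props(1)] symT_def is_traj_def
  by (auto simp: app_symc)

lemma opsem_Id0: "opsem (Id0 :: 'k::field circ) = idT 0"
  unfolding opsem_simple[of Id0, simplified] idT_def is_traj_def by auto

lemma opsem_Id1: "opsem (Id1 :: 'k::field circ) = idT 1"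
  unfolding opsem_simple[of Id1, simplified] idT_def is_traj_def by auto

lemma opsem_Sw: "opsem (Sw :: 'k::field circ) = symT 1 1"
  unfolding opsem_simple[of Sw, simplified] symT_def is_traj_def by (auto simp: numeral_2_eq_2)

lemma pad:
  fixes c :: "'k::field circ"
  assumes comp: "computation c t s u v" and w: "wf c" and le: "t' \<le> t"
  shows "\<exists>s' u' v'. computation c t' s' u' v' \<and>
     trj (cdom c) (ccod c) t' u' v' = trj (cdom c) (ccod c) t u v"
proof -
  define d where "d = nat (t - t')"
  define s' where "s' = (\<lambda>i. if i < d then init c else s (i - d))"
  define u' where "u' = (\<lambda>i. if i < d then replicate (cdom c) 0 else u (i - d))"
  define v' where "v' = (\<lambda>i. if i < d then replicate (ccod c) 0 else v (i - d))"
  have st: "\<forall>i. step (t + int i) (s i) (u i) (v i) (s (Suc i))" and s0: "s 0 = init c" and t0: "t \<le> 0"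
    using comp by (auto simp: computation_def)
  have "step (t' + int i) (s' i) (u' i) (v' i) (s' (Suc i))" for i
  proof (cases "i < d")
    case True
    then have "t' + int i \<noteq> 0" using t0 le by (simp add: d_def)
    moreover have "s' (Suc i) = init c" using True s0 by (auto simp: s'_def)
    ultimately show ?thesis using idle[OF w] True by (simp add: s'_def u'_def v'_def)
  next
    case False
    have e: "s' i = s (i - d)" "s' (Suc i) = s (Suc (i - d))" "u' i = u (i - d)" "v' i = v (i - d)"
      using False by (auto simp: s'_def u'_def v'_def Suc_diff_le)
    have tt: "t' + int i = t + int (i - d)" using le False by (simp add: d_def)
    have "step (t + int (i - d)) (s (i - d)) (u (i - d)) (v (i - d)) (s (Suc (i - d)))" using st by blast
    then show ?thesis unfolding e tt .
  qed
  moreover have "s' 0 = init c" using s0 by (simp add: s'_def)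
  ultimately have "computation c t' s' u' v'" using le t0 by (simp add: computation_def)
  moreover have "trj (cdom c) (ccod c) t' u' v' = trj (cdom c) (ccod c) t u v"
  proof
    fix i
    show "trj (cdom c) (ccod c) t' u' v' i = trj (cdom c) (ccod c) t u v i"
    proof (cases "i < t")
      case True then show ?thesis by (auto simp: trj_def u'_def v'_def d_def)
    next
      case False
      then have "\<not> nat (i - t') < d" "nat (i - t') - d = nat (i - t)" using le by (auto simp: d_def)
      then show ?thesis using False le by (auto simp: trj_def u'_def v'_def)
    qed
  qed
  ultimately show ?thesis by blast
qed

fun lft :: "('k,'r) cterm \<Rightarrow> ('k,'r) cterm" where
  "lft (Seq a b) = a" | "lft (Par a b) = a" | "lft x = x"
fun rgt :: "('k,'r) cterm \<Rightarrow> ('k,'r) cterm" where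
  "rgt (Seq a b) = b" | "rgt (Par a b) = b" | "rgt x = x"

lemma seq_sub:
  fixes c d :: "'k::field circ"
  assumes "\<sigma> \<in> opsem (Seq c d)" and cd: "ccod c = cdom d"
  shows "\<sigma> \<in> compT (opsem c) (opsem d)"
proof -
  obtain t s u v where comp: "computation (Seq c d) t s u v"
    and sig: "\<sigma> = trj (cdom c) (ccod d) t u v"
    using assms by (auto simp: opsem_iff)
  have st: "\<forall>i. step (t + int i) (s i) (u i) (v i) (s (Suc i))" and s0: "s 0 = init (Seq c d)" and t0: "t \<le> 0"
    using comp by (auto simp: computation_def)
  have sS: "s i = Seq (lft (s i)) (rgt (s i))" for i
  proof (induction i)
    case 0 then show ?case using s0 by simp
  next
    case (Suc j)
    have "step (t + int j) (s j) (u j) (v j) (s (Suc j))" using st by blast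
    then have "step (t + int j) (Seq (lft (s j)) (rgt (s j))) (u j) (v j) (s (Suc j))" using Suc by simp
    then show ?case by (auto simp: step_Seq)
  qed
  have "\<forall>i. \<exists>w. step (t + int i) (lft (s i)) (u i) w (lft (s (Suc i))) \<and>
      step (t + int i) (rgt (s i)) w (v i) (rgt (s (Suc i)))"
  proof
    fix i
    have "step (t + int i) (Seq (lft (s i)) (rgt (s i))) (u i) (v i) (Seq (lft (s (Suc i))) (rgt (s (Suc i))))"
      using st sS by metis
    then show "\<exists>w. step (t + int i) (lft (s i)) (u i) w (lft (s (Suc i))) \<and>
      step (t + int i) (rgt (s i)) w (v i) (rgt (s (Suc i)))" by (auto simp: step_Seq)
  qed
  then obtain w where w: "\<forall>i. step (t + int i) (lft (s i)) (u i) (w i) (lft (s (Suc i))) \<and>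
      step (t + int i) (rgt (s i)) (w i) (v i) (rgt (s (Suc i)))" by metis
  have c1: "computation c t (\<lambda>i. lft (s i)) u w" using w s0 t0 by (auto simp: computation_def)
  have c2: "computation d t (\<lambda>i. rgt (s i)) w v" using w s0 t0 by (auto simp: computation_def)
  show ?thesis unfolding compT_def
    apply (rule CollectI, rule exI[of _ "trj (cdom c) (ccod c) t u w"], rule exI[of _ "trj (cdom d) (ccod d) t w v"])
    using c1 c2 cd by (auto simp: sig opsem_iff trj_def)
qed

lemma seq_sup:
  fixes c d :: "'k::field circ"
  assumes "\<sigma> \<in> compT (opsem c) (opsem d)" and cd: "ccod c = cdom d" and wc: "wf c" and wd: "wf d"
  shows "\<sigma> \<in> opsem (Seq c d)"
proof -
  obtain t1 s1 u1 w1 t2 s2 w2 v2 where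
    c1: "computation c t1 s1 u1 w1" and c2: "computation d t2 s2 w2 v2" and
    sg: "\<sigma> = (\<lambda>i. (fst (trj (cdom c) (ccod c) t1 u1 w1 i), snd (trj (cdom d) (ccod d) t2 w2 v2 i)))" and
    eq: "\<forall>i. snd (trj (cdom c) (ccod c) t1 u1 w1 i) = fst (trj (cdom d) (ccod d) t2 w2 v2 i)"
    using assms(1) unfolding compT_def opsem_iff by blast
  define t where "t = min t1 t2"
  obtain s1' u1' w1' where c1': "computation c t s1' u1' w1'" and
    e1: "trj (cdom c) (ccod c) t u1' w1' = trj (cdom c) (ccod c) t1 u1 w1"
    using pad[OF c1 wc, of t] by (auto simp: t_def)
  obtain s2' w2' v2' where c2': "computation d t s2' w2' v2'" and
    e2: "trj (cdom d) (ccod d) t w2' v2' = trj (cdom d) (ccod d) t2 w2 v2"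
    using pad[OF c2 wd, of t] by (auto simp: t_def)
  have eq': "\<forall>i. snd (trj (cdom c) (ccod c) t u1' w1' i) = fst (trj (cdom d) (ccod d) t w2' v2' i)"
    using eq unfolding e1 e2 .
  have ww: "w1' k = w2' k" for k
    using eq'[rule_format, of "t + int k"] by (simp add: trj_def)
  have "computation (Seq c d) t (\<lambda>i. Seq (s1' i) (s2' i)) u1' v2'"
    using c1' c2' ww unfolding computation_def step_Seq by auto
  moreover have "\<sigma> = trj (cdom (Seq c d)) (ccod (Seq c d)) t u1' v2'"
    unfolding sg e1[symmetric] e2[symmetric] by (auto simp: trj_def)
  ultimately show ?thesis unfolding opsem_iff by blast
qed

lemma par_sub:
  fixes c d :: "'k::field circ"
  assumes "\<sigma> \<in> opsem (Par c d)"
  shows "\<sigma> \<in> parT (opsem c) (opsem d)"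
proof -
  obtain t s u v where comp: "computation (Par c d) t s u v"
    and sig: "\<sigma> = trj (cdom c + cdom d) (ccod c + ccod d) t u v"
    using assms by (auto simp: opsem_iff)
  have st: "\<forall>i. step (t + int i) (s i) (u i) (v i) (s (Suc i))" and s0: "s 0 = init (Par c d)" and t0: "t \<le> 0"
    using comp by (auto simp: computation_def)
  have sS: "s i = Par (lft (s i)) (rgt (s i))" for i
  proof (induction i)
    case 0 then show ?case using s0 by simp
  next
    case (Suc j)
    have "step (t + int j) (s j) (u j) (v j) (s (Suc j))" using st by blast
    then have "step (t + int j) (Par (lft (s j)) (rgt (s j))) (u j) (v j) (s (Suc j))" using Suc by simp
    then show ?case by (auto simp: step_Par)
  qed
  have "\<forall>i. \<exists>p. u i = fst (fst p) @ snd (fst p) \<and> v i = fst (snd p) @ snd (snd p) \<and>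
      step (t + int i) (lft (s i)) (fst (fst p)) (fst (snd p)) (lft (s (Suc i))) \<and>
      step (t + int i) (rgt (s i)) (snd (fst p)) (snd (snd p)) (rgt (s (Suc i)))"
  proof
    fix i
    have "step (t + int i) (Par (lft (s i)) (rgt (s i))) (u i) (v i) (Par (lft (s (Suc i))) (rgt (s (Suc i))))"
      using st sS by metis
    then obtain v1 v2 u1 u2 where "u i = v1 @ v2" "v i = u1 @ u2"
      "step (t + int i) (lft (s i)) v1 u1 (lft (s (Suc i)))"
      "step (t + int i) (rgt (s i)) v2 u2 (rgt (s (Suc i)))" by (auto simp: step_Par)
    then show "\<exists>p. u i = fst (fst p) @ snd (fst p) \<and> v i = fst (snd p) @ snd (snd p) \<and>
      step (t + int i) (lft (s i)) (fst (fst p)) (fst (snd p)) (lft (s (Suc i))) \<and>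
      step (t + int i) (rgt (s i)) (snd (fst p)) (snd (snd p)) (rgt (s (Suc i)))"
      by (intro exI[of _ "((v1, v2), (u1, u2))"]) simp
  qed
  then obtain p where p: "\<forall>i. u i = fst (fst (p i)) @ snd (fst (p i)) \<and> v i = fst (snd (p i)) @ snd (snd (p i)) \<and>
      step (t + int i) (lft (s i)) (fst (fst (p i))) (fst (snd (p i))) (lft (s (Suc i))) \<and>
      step (t + int i) (rgt (s i)) (snd (fst (p i))) (snd (snd (p i))) (rgt (s (Suc i)))" by metis
  define u1 where "u1 = (\<lambda>i. fst (fst (p i)))"
  define u2 where "u2 = (\<lambda>i. snd (fst (p i)))"
  define v1 where "v1 = (\<lambda>i. fst (snd (p i)))"
  define v2 where "v2 = (\<lambda>i. snd (snd (p i)))"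
  have c1: "computation c t (\<lambda>i. lft (s i)) u1 v1" using p s0 t0 by (auto simp: computation_def u1_def v1_def)
  have c2: "computation d t (\<lambda>i. rgt (s i)) u2 v2" using p s0 t0 by (auto simp: computation_def u2_def v2_def)
  show ?thesis unfolding parT_def
    apply (rule CollectI, rule exI[of _ "trj (cdom c) (ccod c) t u1 v1"], rule exI[of _ "trj (cdom d) (ccod d) t u2 v2"])
    using c1 c2 p by (auto simp: sig opsem_iff trj_def replicate_add u1_def u2_def v1_def v2_def)
qed

lemma par_sup:
  fixes c d :: "'k::field circ"
  assumes "\<sigma> \<in> parT (opsem c) (opsem d)" and wc: "wf c" and wd: "wf d"
  shows "\<sigma> \<in> opsem (Par c d)"
proof -
  obtain t1 s1 u1 w1 t2 s2 w2 v2 where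
    c1: "computation c t1 s1 u1 w1" and c2: "computation d t2 s2 w2 v2" and
    sg: "\<sigma> = (\<lambda>i. (fst (trj (cdom c) (ccod c) t1 u1 w1 i) @ fst (trj (cdom d) (ccod d) t2 w2 v2 i),
                   snd (trj (cdom c) (ccod c) t1 u1 w1 i) @ snd (trj (cdom d) (ccod d) t2 w2 v2 i)))"
    using assms(1) unfolding parT_def opsem_iff by blast
  define t where "t = min t1 t2"
  obtain s1' u1' w1' where c1': "computation c t s1' u1' w1'" and
    e1: "trj (cdom c) (ccod c) t u1' w1' = trj (cdom c) (ccod c) t1 u1 w1"
    using pad[OF c1 wc, of t] by (auto simp: t_def)
  obtain s2' w2' v2' where c2': "computation d t s2' w2' v2'" and
    e2: "trj (cdom d) (ccod d) t w2' v2' = trj (cdom d) (ccod d) t2 w2 v2"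
    using pad[OF c2 wd, of t] by (auto simp: t_def)
  have "computation (Par c d) t (\<lambda>i. Par (s1' i) (s2' i)) (\<lambda>i. u1' i @ w2' i) (\<lambda>i. w1' i @ v2' i)"
    unfolding computation_def
  proof (intro conjI allI)
    show "t \<le> 0" using c1' by (simp add: computation_def)
    show "Par (s1' 0) (s2' 0) = init (Par c d)" using c1' c2' by (simp add: computation_def)
    fix i
    have "step (t + int i) (s1' i) (u1' i) (w1' i) (s1' (Suc i))"
      "step (t + int i) (s2' i) (w2' i) (v2' i) (s2' (Suc i))"
      using c1' c2' by (auto simp: computation_def)
    then show "step (t + int i) (Par (s1' i) (s2' i)) (u1' i @ w2' i) (w1' i @ v2' i) (Par (s1' (Suc i)) (s2' (Suc i)))"
      by (rule step.intros)
  qed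
  moreover have "\<sigma> = trj (cdom (Par c d)) (ccod (Par c d)) t (\<lambda>i. u1' i @ w2' i) (\<lambda>i. w1' i @ v2' i)"
    unfolding sg e1[symmetric] e2[symmetric] by (auto simp: trj_def replicate_add)
  ultimately show ?thesis unfolding opsem_iff by blast
qed

theorem theorem1:
  fixes c d :: "'k::field circ"
  shows "(wf c \<and> wf d \<and> ccod c = cdom d \<longrightarrow> opsem (Seq c d) = compT (opsem c) (opsem d))
    \<and> (wf c \<and> wf d \<longrightarrow> opsem (Par c d) = parT (opsem c) (opsem d))
    \<and> opsem (Id0 :: 'k circ) = idT 0
    \<and> opsem (Id1 :: 'k circ) = idT 1
    \<and> opsem (Sw :: 'k circ) = symT 1 1
    \<and> (\<forall>n. opsem (idc n :: 'k circ) = idT n)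
    \<and> (\<forall>n m. opsem (symc n m :: 'k circ) = symT n m)"
  using seq_sub seq_sup par_sub par_sup opsem_Id0 opsem_Id1 opsem_Sw opsem_idc opsem_symc
  by blast

end
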